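(* Let $n\geq3$ and let $S_n$ act on $V=\mathbb{C}^n$ by its natural permutation representation. The $S_n$-invariant constant $2$-cochains $\kappa$ satisfying the mixed Jacobi identity $$[v_1,\kappa(v_2,v_3)]+[v_2,\kappa(v_3,v_1)]+[v_3,\kappa(v_1,v_2)]=0\ \text{ in } S(V)\#S_n \quad\text{for all } v_1,v_2,v_3\in V$$ are exactly the maps $\kappa^C_{\mathrm{tri}}$ defined below, for $c\in\mathbb{C}$.
   Context: $S_n$ acts by $\sigma e_i=e_{\sigma(i)}$; $V^g$ is the fixed space of $g$. $S(V)\#S_n$ is the skew group algebra $S(V)\otimes\mathbb{C}S_n$ with $(r\otimes g)(s\otimes h)=r(g\cdot s)\otimes gh$, and $[\cdot,\cdot]$ its commutator. A constant 2-cochain is $\kappa=\sum_g\kappa_gg$ with $\kappa_g:\bigwedge^2V\to\mathbb{C}$ linear, and $\kappa(v,w)=\sum_g\kappa_g(v,w)g$; it is $S_n$-invariant if $\kappa_g(v,w)=\kappa_{hgh^{-1}}(hv,hw)$ for all $g,h,v,w$. $\kappa^C_{\mathrm{tri}}$ is the constant 2-cochain supported on 3-cycles with, for each 3-cycle $(ijk)$, $\kappa^C_{(ijk)}(e_i,e_j)=\kappa^C_{(ijk)}(e_j,e_k)=\kappa^C_{(ijk)}(e_k,e_i)=c$ and $\kappa^C_{(ijk)}(e_l,e_m)=0$ whenever $e_l$ or $e_m$ lies in $V^{(ijk)}$. *)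

theory Defs
  imports "HOL-Analysis.Analysis" "HOL-Combinatorics.Permutations"
begin

text \<open>V = C^n is modelled as complex^'n with a finite index type 'n (n = CARD('n)).
  S_n is the set of permutations p of 'n (p permutes UNIV), acting by p e_i = e_(p i),
  i.e. (p . v) at coordinate j equals v at coordinate (inv p j).\<close>

definition perm_act :: "('n::finite \<Rightarrow> 'n) \<Rightarrow> complex^'n \<Rightarrow> complex^'n" where
  "perm_act p v = (\<chi> j. v $ (inv p j))"

text \<open>A constant 2-cochain: kappa g is a complex-bilinear alternating form on V
  (i.e. a linear map from the second exterior power of V to C), for each g in S_n.\<close>

definition alt_bilinear :: "(complex^'n \<Rightarrow> complex^'n \<Rightarrow> complex) \<Rightarrow> bool" where
  "alt_bilinear B \<longleftrightarrow>
     (\<forall>u v w. B (u + v) w = B u w + B v w) \<and>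
     (\<forall>u v w. B u (v + w) = B u v + B u w) \<and>
     (\<forall>(a::complex) v w. B (a *s v) w = a * B v w) \<and>
     (\<forall>(a::complex) v w. B v (a *s w) = a * B v w) \<and>
     (\<forall>v. B v v = 0)"

definition constant_2cochain :: "(('n::finite \<Rightarrow> 'n) \<Rightarrow> complex^'n \<Rightarrow> complex^'n \<Rightarrow> complex) \<Rightarrow> bool" where
  "constant_2cochain \<kappa> \<longleftrightarrow> (\<forall>g. g permutes UNIV \<longrightarrow> alt_bilinear (\<kappa> g))"

definition Sn_invariant :: "(('n::finite \<Rightarrow> 'n) \<Rightarrow> complex^'n \<Rightarrow> complex^'n \<Rightarrow> complex) \<Rightarrow> bool" where
  "Sn_invariant \<kappa> \<longleftrightarrow>
     (\<forall>g h v w. g permutes UNIV \<longrightarrow> h permutes UNIV \<longrightarrow>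
        \<kappa> g v w = \<kappa> (h \<circ> g \<circ> inv h) (perm_act h v) (perm_act h w))"

text \<open>Elements of the group algebra C S_n: coefficient functions on permutations.
  kappa(v,w) = sum_g kappa_g(v,w) g.\<close>

definition kappa_at :: "(('n::finite \<Rightarrow> 'n) \<Rightarrow> complex^'n \<Rightarrow> complex^'n \<Rightarrow> complex)
    \<Rightarrow> complex^'n \<Rightarrow> complex^'n \<Rightarrow> ('n \<Rightarrow> 'n) \<Rightarrow> complex" where
  "kappa_at \<kappa> v w = (\<lambda>g. if g permutes UNIV then \<kappa> g v w else 0)"

text \<open>Elements of S(V)#S_n of the form sum_g p_g \<otimes> g with each p_g in V = S^1(V)
  are represented by their coefficient functions g \<mapsto> p_g.  For v in V and
  a = sum_g a_g g in C S_n, the skew multiplication rule gives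
  (v \<otimes> 1)(1 \<otimes> g) = v \<otimes> g and (1 \<otimes> g)(v \<otimes> 1) = (g.v) \<otimes> g, hence
  [v, a] = sum_g a_g (v - g.v) \<otimes> g.\<close>

definition skew_comm :: "complex^'n \<Rightarrow> (('n::finite \<Rightarrow> 'n) \<Rightarrow> complex) \<Rightarrow> ('n \<Rightarrow> 'n) \<Rightarrow> complex^'n" where
  "skew_comm v a = (\<lambda>g. if g permutes UNIV then a g *s (v - perm_act g v) else 0)"

definition mixed_jacobi :: "(('n::finite \<Rightarrow> 'n) \<Rightarrow> complex^'n \<Rightarrow> complex^'n \<Rightarrow> complex) \<Rightarrow> bool" where
  "mixed_jacobi \<kappa> \<longleftrightarrow>
     (\<forall>v1 v2 v3. (\<lambda>g. skew_comm v1 (kappa_at \<kappa> v2 v3) g + skew_comm v2 (kappa_at \<kappa> v3 v1) g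
                      + skew_comm v3 (kappa_at \<kappa> v1 v2) g) = (\<lambda>g. 0))"

definition is_3cycle :: "('n \<Rightarrow> 'n) \<Rightarrow> bool" where
  "is_3cycle g \<longleftrightarrow> g permutes UNIV \<and> card {i. g i \<noteq> i} = 3"

text \<open>kappa^C_tri: for a 3-cycle g = (i j k) (so j = g i, k = g j) the unique alternating
  bilinear form with value c on (e_i,e_j),(e_j,e_k),(e_k,e_i) that vanishes when an
  argument lies in V^g is
  c (v_i w_j - v_j w_i + v_j w_k - v_k w_j + v_k w_i - v_i w_k)
  = c * sum_l (v_l w_(g l) - v_(g l) w_l); zero on non-3-cycles.\<close>

definition kappa_tri :: "complex \<Rightarrow> ('n::finite \<Rightarrow> 'n) \<Rightarrow> complex^'n \<Rightarrow> complex^'n \<Rightarrow> complex" where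
  "kappa_tri c g v w =
     (if is_3cycle g then c * (\<Sum>l\<in>UNIV. v $ l * w $ (g l) - v $ (g l) * w $ l) else 0)"

end

theory Submission
  imports Defs
begin


lemma ax_nth: "(axis a (1::complex) :: complex^'n::finite) $ j = (if j = a then 1 else 0)"
  by (simp add: axis_def)

lemma perm_act_axis: "h permutes UNIV \<Longrightarrow> perm_act h (axis a (1::complex)) = (axis (h a) 1 :: complex^'n::finite)"
  unfolding perm_act_def by (simp add: vec_eq_iff ax_nth) (metis permutes_inverses(1) permutes_inverses(2))

lemma ab_zero: "alt_bilinear B \<Longrightarrow> B 0 w = 0"
  unfolding alt_bilinear_def by (metis mult_zero_left vector_smult_lzero)

lemma ab_zero2: "alt_bilinear B \<Longrightarrow> B w 0 = 0"
  unfolding alt_bilinear_def by (metis mult_zero_left vector_smult_lzero)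

lemma ab_sum1: assumes a: "alt_bilinear B" shows "finite S \<Longrightarrow> B (sum f S) w = (\<Sum>x\<in>S. B (f x) w)"
proof (induction S rule: finite_induct)
  case empty then show ?case using ab_zero[OF a] by simp
next
  case (insert x F)
  have add: "\<And>u v w. B (u + v) w = B u w + B v w" using a by (simp add: alt_bilinear_def)
  show ?case using insert by (simp add: add)
qed

lemma ab_sum2: assumes a: "alt_bilinear B" shows "finite S \<Longrightarrow> B w (sum f S) = (\<Sum>x\<in>S. B w (f x))"
proof (induction S rule: finite_induct)
  case empty then show ?case using ab_zero2[OF a] by simp
next
  case (insert x F)
  have add: "\<And>u v w. B u (v + w) = B u v + B u w" using a by (simp add: alt_bilinear_def)
  show ?case using insert by (simp add: add)
qed

lemma ab_expand:
  fixes B :: "complex^'n::finite \<Rightarrow> complex^'n \<Rightarrow> complex"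
  assumes "alt_bilinear B"
  shows "B v w = (\<Sum>a\<in>UNIV. \<Sum>b\<in>UNIV. v$a * w$b * B (axis a 1) (axis b 1))"
proof -
  have "B v w = B (\<Sum>a\<in>UNIV. v$a *s axis a 1) (\<Sum>b\<in>UNIV. w$b *s axis b 1)"
    by (simp add: basis_expansion)
  also have "\<dots> = (\<Sum>a\<in>UNIV. \<Sum>b\<in>UNIV. B (v$a *s axis a 1) (w$b *s axis b 1))"
    by (simp add: ab_sum1[OF assms] ab_sum2[OF assms], rule sum.swap)
  also have "\<dots> = (\<Sum>a\<in>UNIV. \<Sum>b\<in>UNIV. v$a * w$b * B (axis a 1) (axis b 1))"
  proof (intro sum.cong refl)
    fix a b
    have sc: "\<And>c v w. B (c *s v) w = c * B v w" "\<And>c v w. B v (c *s w) = c * B v w"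
      using assms unfolding alt_bilinear_def by blast+
    show "B (v$a *s axis a 1) (w$b *s axis b 1) = v$a * w$b * B (axis a 1) (axis b 1)"
      by (simp only: sc mult.assoc mult.left_commute)
  qed
  finally show ?thesis .
qed

lemma ab_antisym: assumes a: "alt_bilinear B" shows "B u v = - B v u"
proof -
  have d: "\<And>u v w. B (u + v) w = B u w + B v w" "\<And>u v w. B u (v + w) = B u v + B u w" "\<And>v. B v v = 0"
    using a by (auto simp: alt_bilinear_def)
  have "0 = B (u+v) (u+v)" by (rule d(3)[symmetric])
  also have "\<dots> = B u v + B v u" unfolding d(1) unfolding d(2) unfolding d(3) by simp
  finally have "B u v + B v u = 0" by simp
  then show ?thesis by (simp only: eq_neg_iff_add_eq_0)
qed



context
  fixes g :: "'n::finite \<Rightarrow> 'n" and K :: "'n \<Rightarrow> 'n \<Rightarrow> complex"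
  assumes gp: "g permutes UNIV"
    and K0: "\<And>a. K a a = 0"
    and Kas: "\<And>a b. K a b = - K b a"
    and J: "\<And>a b c m. K b c * ((if a = m then 1 else 0) - (if g a = m then 1 else 0))
              + K c a * ((if b = m then 1 else 0) - (if g b = m then 1 else 0))
              + K a b * ((if c = m then 1 else 0) - (if g c = m then 1 else 0)) = 0"
    and I: "\<And>h a b. h permutes UNIV \<Longrightarrow> h \<circ> g \<circ> inv h = g \<Longrightarrow> K a b = K (h a) (h b)"
begin

lemma gi: "g x = g y \<longleftrightarrow> x = y"
  using permutes_inj[OF gp] by (simp add: inj_eq)

lemma mvg: "g x \<noteq> x \<Longrightarrow> g (g x) \<noteq> g x"
  by (simp add: gi)

lemma stepA: assumes "g a = a" "g b = b" "g c \<noteq> c" shows "K a b = 0"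
proof -
  have "a \<noteq> c" "b \<noteq> c" using assms by auto
  then show ?thesis using J[of a b c c] assms by simp
qed

lemma Ig: "K a b = K (g a) (g b)"
proof -
  have "g \<circ> g \<circ> inv g = g" using permutes_inverses[OF gp] by (auto simp: fun_eq_iff)
  then show ?thesis using I[OF gp] by blast
qed

lemma transp_case:
  assumes bm: "g p \<noteq> p" and only: "\<And>c. g c \<noteq> c \<Longrightarrow> c = p \<or> c = g p"
  shows "K a b = 0"
proof -
  define q where "q = g p"
  have pq: "p \<noteq> q" using bm q_def by auto
  have gq: "g q = p"
  proof -
    have "g q \<noteq> q" using mvg[OF bm] q_def by simp
    then have "g q = p \<or> g q = q" using only[of q] only[of "g q"] mvg q_def by metis
    then show ?thesis using \<open>g q \<noteq> q\<close> by blast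
  qed
  have fx: "\<And>x. x \<noteq> p \<Longrightarrow> x \<noteq> q \<Longrightarrow> g x = x" using only q_def by blast
  have fixed: "K x y = 0" if "x \<noteq> p" "x \<noteq> q" for x y
  proof -
    have gx: "g x = x" using fx that by blast
    consider "y = p" | "y = q" | "y \<noteq> p" "y \<noteq> q" by blast
    then show ?thesis
    proof cases
      case 1
      have e1: "K x p = K x q" using Ig[of x p] gx q_def by simp
      have e2: "K q x = K x p" using J[of x p q p] gx pq gq q_def that by simp
      show ?thesis using e1 e2 Kas[of q x] 1 by simp
    next
      case 2
      have e1: "K x p = K x q" using Ig[of x p] gx q_def by simp
      have e2: "K q x = K x p" using J[of x p q p] gx pq gq q_def that by simp
      show ?thesis using e1 e2 Kas[of q x] 2 by simp
    next
      case 3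
      show ?thesis using stepA[of x y p] gx fx[OF 3] bm by simp
    qed
  qed
  have Kpq: "K p q = 0" using Ig[of p q] gq q_def Kas[of p q] by simp
  show ?thesis
  proof (cases "a \<noteq> p \<and> a \<noteq> q")
    case True then show ?thesis using fixed by blast
  next
    case False
    show ?thesis
    proof (cases "b \<noteq> p \<and> b \<noteq> q")
      case True then show ?thesis using fixed[of b a] Kas[of a b] by simp
    next
      case False
      then show ?thesis using \<open>\<not> (a \<noteq> p \<and> a \<noteq> q)\<close> Kpq Kas[of p q] K0 by auto
    qed
  qed
qed

lemma id_case: assumes "\<And>x. g x = x" shows "K a b = 0"
proof -
  have g: "g = id" using assms by auto
  have "Transposition.transpose a b \<circ> g \<circ> inv (Transposition.transpose a b) = g"
    by (simp add: g)
  moreover have "Transposition.transpose a b permutes UNIV" by (simp add: permutes_swap_id)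
  ultimately have "K a b = K (Transposition.transpose a b a) (Transposition.transpose a b b)"
    using I by blast
  then have "K a b = K b a" by simp
  then show ?thesis using Kas[of a b] by simp
qed

lemma stepB:
  assumes ga: "g a = a" and gb: "g b \<noteq> b"
    and NT: "\<And>b. g b \<noteq> b \<Longrightarrow> \<exists>c. g c \<noteq> c \<and> c \<noteq> b \<and> c \<noteq> g b"
  shows "K a b = 0"
proof (cases "g (g b) = b")
  case False
  have "g b \<noteq> g (g b)" using mvg[OF gb] by auto
  then show ?thesis using J[of a b "g b" "g (g b)"] ga False by simp
next
  case True
  obtain c where c: "g c \<noteq> c" "c \<noteq> b" "c \<noteq> g b" using NT[OF gb] by blast
  have "a \<noteq> c" using c ga by auto
  then show ?thesis using J[of a b c c] ga c by simp
qed

lemma C1: assumes "g c \<noteq> c" "c \<noteq> a" "c \<noteq> b" "c \<noteq> g a" "c \<noteq> g b" shows "K a b = 0"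
  using J[of a b c c] assms by simp

lemma C4: assumes "g a \<noteq> a" "b \<noteq> g a" "g (g a) \<noteq> a" "g (g a) \<noteq> b" shows "K a b = 0"
proof -
  have "g a \<noteq> g (g a)" using mvg[OF assms(1)] by metis
  moreover have "g b \<noteq> g (g a)" using assms(2) by (simp add: gi)
  ultimately show ?thesis using J[of a b "g a" "g (g a)"] assms by simp
qed

lemma C4a: assumes "g a \<noteq> a" "a \<noteq> b" "b \<noteq> g a" "a \<noteq> g b" "g (g a) = b" shows "K a b = 0"
proof -
  have e1: "K (g a) b = 0" using J[of a "g a" b a] assms by simp
  have "g b \<noteq> g a" using assms(2) by (simp add: gi)
  then have e2: "K (g a) b = K b a" using J[of a "g a" b "g a"] assms by simp
  show ?thesis using e1 e2 Kas[of a b] by simp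
qed

lemma C2: assumes am: "g a \<noteq> a" and Ms: "\<And>c. g c \<noteq> c \<Longrightarrow> c = a \<or> c = g a \<or> c = g (g a)"
  and NT: "\<And>b. g b \<noteq> b \<Longrightarrow> \<exists>c. g c \<noteq> c \<and> c \<noteq> b \<and> c \<noteq> g b"
  shows "is_3cycle g"
proof -
  obtain c where c: "g c \<noteq> c" "c \<noteq> a" "c \<noteq> g a" using NT[OF am] by blast
  have cc: "c = g (g a)" using Ms[OF c(1)] c by blast
  have d: "a \<noteq> g a" "g a \<noteq> g (g a)" "g (g a) \<noteq> a" using am mvg[OF am] c cc by auto
  have m2: "g (g a) \<noteq> g a" using mvg[OF am] by auto
  have m3: "g (g (g a)) \<noteq> g (g a)" using mvg[OF mvg[OF am]] by auto
  have "{i. g i \<noteq> i} = {a, g a, g (g a)}"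
  proof
    show "{i. g i \<noteq> i} \<subseteq> {a, g a, g (g a)}" using Ms by blast
    show "{a, g a, g (g a)} \<subseteq> {i. g i \<noteq> i}" using am m2 m3 by auto
  qed
  then show ?thesis unfolding is_3cycle_def using gp d by simp
qed

lemma dbl: assumes "g a \<noteq> a" "g b \<noteq> b" "a \<noteq> b" "b \<noteq> g a" "a \<noteq> g b"
  "g (g a) = a" "g (g b) = b" and Ms: "\<And>c. g c \<noteq> c \<Longrightarrow> c = a \<or> c = b \<or> c = g a \<or> c = g b"
  shows "K a b = 0"
proof -
  define h where "h = Transposition.transpose a (g a)"
  have hp: "h permutes UNIV" unfolding h_def by (simp add: permutes_swap_id)
  have "h \<circ> g \<circ> inv h = g"
  proof
    fix x
    have gbn: "g b \<noteq> g a" using assms(3) by (simp add: gi)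
    have ih: "inv h = h" unfolding h_def by simp
    have hx: "h y = (if y = a then g a else if y = g a then a else y)" for y
      unfolding h_def by (simp add: transpose_def)
    show "(h \<circ> g \<circ> inv h) x = g x"
    proof (cases "x = a \<or> x = g a")
      case True
      then show ?thesis unfolding comp_def ih using assms by (auto simp: hx)
    next
      case False
      then have "h x = x" by (simp add: hx)
      moreover have "g x \<noteq> a" "g x \<noteq> g a" using False assms gi by metis+
      ultimately show ?thesis unfolding comp_def ih by (simp add: hx)
    qed
  qed
  then have "K a b = K (h a) (h b)" using I hp by blast
  also have "\<dots> = K (g a) b" using assms unfolding h_def by (simp add: transpose_def)
  finally have e1: "K a b = K (g a) b" .
  have e2: "K (g a) b = K b a" using J[of a "g a" b a] assms by simp
  show ?thesis using e1 e2 Kas[of a b] by simp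
qed


lemma moved_pair:
  assumes am: "g a \<noteq> a" and bm: "g b \<noteq> b" and ab: "a \<noteq> b"
    and NT: "\<And>b. g b \<noteq> b \<Longrightarrow> \<exists>c. g c \<noteq> c \<and> c \<noteq> b \<and> c \<noteq> g b"
    and n3: "\<not> is_3cycle g"
  shows "K a b = 0"
proof (cases "\<exists>c. g c \<noteq> c \<and> c \<noteq> a \<and> c \<noteq> b \<and> c \<noteq> g a \<and> c \<noteq> g b")
  case True
  then obtain c where "g c \<noteq> c" "c \<noteq> a" "c \<noteq> b" "c \<noteq> g a" "c \<noteq> g b" by blast
  then show ?thesis by (rule C1)
next
  case False
  then have Ms: "\<And>c. g c \<noteq> c \<Longrightarrow> c = a \<or> c = b \<or> c = g a \<or> c = g b" by blast
  show ?thesis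
  proof (cases "b = g a")
    case True
    have "is_3cycle g" using C2[OF am _ NT] Ms True by blast
    then show ?thesis using n3 by blast
  next
    case bga: False
    show ?thesis
    proof (cases "a = g b")
      case True
      have "is_3cycle g" using C2[OF bm _ NT] Ms True by blast
      then show ?thesis using n3 by blast
    next
      case agb: False
      show ?thesis
      proof (cases "g (g a) = a")
        case False
        show ?thesis
        proof (cases "g (g a) = b")
          case True
          show ?thesis using C4a[OF am ab bga agb True] .
        next
          case False
          show ?thesis using C4[OF am bga \<open>g (g a) \<noteq> a\<close> False] .
        qed
      next
        case gga: True
        show ?thesis
        proof (cases "g (g b) = b")
          case True
          show ?thesis using dbl[OF am bm ab bga agb gga True Ms] .
        next
          case False
          have "K b a = 0"
          proof (cases "g (g b) = a")
            case True
            show ?thesis using C4a[OF bm _ agb bga True] ab by blast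
          next
            case False
            show ?thesis using C4[OF bm agb \<open>g (g b) \<noteq> b\<close> False] .
          qed
          then show ?thesis using Kas[of a b] by simp
        qed
      qed
    qed
  qed
qed

lemma core0: assumes n3: "\<not> is_3cycle g" shows "K a b = 0"
proof (cases "\<forall>x. g x = x")
  case True then show ?thesis using id_case by blast
next
  case False
  then obtain p where p: "g p \<noteq> p" by blast
  show ?thesis
  proof (cases "\<exists>b. g b \<noteq> b \<and> (\<forall>c. g c \<noteq> c \<longrightarrow> c = b \<or> c = g b)")
    case True
    then obtain q where "g q \<noteq> q" "\<And>c. g c \<noteq> c \<Longrightarrow> c = q \<or> c = g q" by blast
    then show ?thesis using transp_case by blast
  next
    case False
    then have NT: "\<And>b. g b \<noteq> b \<Longrightarrow> \<exists>c. g c \<noteq> c \<and> c \<noteq> b \<and> c \<noteq> g b" by blast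
    show ?thesis
    proof (cases "g a = a")
      case ga: True
      show ?thesis
      proof (cases "g b = b")
        case True then show ?thesis using stepA[OF ga True p] by blast
      next
        case False then show ?thesis using stepB[OF ga False NT] by blast
      qed
    next
      case ga: False
      show ?thesis
      proof (cases "g b = b")
        case True then show ?thesis using stepB[OF True ga NT] Kas[of a b] by simp
      next
        case False
        show ?thesis
        proof (cases "a = b")
          case True then show ?thesis using K0 by simp
        next
          case ab: False
          show ?thesis using moved_pair[OF ga False ab NT n3] .
        qed
      qed
    qed
  qed
qed


lemma three_struct:
  assumes c3: "is_3cycle g" and xm: "g x \<noteq> x"
  shows "g (g x) \<noteq> x" "{i. g i \<noteq> i} = {x, g x, g (g x)}" "g (g (g x)) = x"
proof -
  let ?M = "{i. g i \<noteq> i}"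
  have cM: "card ?M = 3" using c3 unfolding is_3cycle_def by blast
  have fM: "finite ?M" by simp
  have ym: "g (g x) \<noteq> g x" using mvg[OF xm] .
  have zm: "g (g (g x)) \<noteq> g (g x)" using mvg[OF ym] .
  show zx: "g (g x) \<noteq> x"
  proof
    assume e: "g (g x) = x"
    have "\<not> ?M \<subseteq> {x, g x}"
    proof
      assume "?M \<subseteq> {x, g x}"
      then have "card ?M \<le> card {x, g x}" by (intro card_mono) auto
      also have "\<dots> \<le> 2" by (simp add: card_insert_le_m1)
      finally show False using cM by simp
    qed
    then obtain w where w: "g w \<noteq> w" "w \<noteq> x" "w \<noteq> g x" by blast
    have wm: "g (g w) \<noteq> g w" using mvg[OF w(1)] .
    have "g w \<noteq> x" using w(3) e by (metis gi)
    moreover have "g w \<noteq> g x" using w(2) by (simp add: gi)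
    ultimately have "card {x, g x, w, g w} = 4" using w xm by auto
    moreover have "{x, g x, w, g w} \<subseteq> ?M" using xm ym w wm by auto
    ultimately have "4 \<le> card ?M" by (metis card_mono fM)
    then show False using cM by simp
  qed
  have sub: "{x, g x, g (g x)} \<subseteq> ?M" using xm ym zm by blast
  have "card {x, g x, g (g x)} = 3" using xm ym zx by auto
  then show M: "?M = {x, g x, g (g x)}" using card_subset_eq[OF fM sub] cM by simp
  have "g (g (g x)) \<in> ?M" using mvg[OF zm] by simp
  then have "g (g (g x)) = x \<or> g (g (g x)) = g x \<or> g (g (g x)) = g (g x)" using M by blast
  moreover have "g (g (g x)) \<noteq> g x" using zx by (simp add: gi)
  ultimately show "g (g (g x)) = x" using zm by blast
qed

lemma core3:
  assumes c3: "is_3cycle g" and xm: "g x \<noteq> x"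
  shows "K a b = K x (g x) * ((if b = g a then 1 else 0) - (if a = g b then 1 else 0))"
proof -
  note S = three_struct[OF c3 xm]
  define y where "y = g x"
  define z where "z = g y"
  have gx: "g x = y" and gy: "g y = z" and gz: "g z = x" using S(3) y_def z_def by auto
  have d: "x \<noteq> y" "y \<noteq> z" "z \<noteq> x" using xm mvg[OF xm] S(1) y_def z_def by auto
  have M: "\<And>c. g c \<noteq> c \<longleftrightarrow> c = x \<or> c = y \<or> c = z" using S(2) y_def z_def by blast
  have NT: "\<And>b. g b \<noteq> b \<Longrightarrow> \<exists>c. g c \<noteq> c \<and> c \<noteq> b \<and> c \<noteq> g b"
  proof -
    fix b assume "g b \<noteq> b"
    then have "b = x \<or> b = y \<or> b = z" using M by blast
    then show "\<exists>c. g c \<noteq> c \<and> c \<noteq> b \<and> c \<noteq> g b"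
      using M gx gy gz d by metis
  qed
  define k where "k = K x y"
  have k1: "K y z = k" using Ig[of x y] gx gy k_def by simp
  have k2: "K z x = k" using Ig[of y z] gy gz k1 by simp
  show ?thesis
  proof (cases "g a = a")
    case ga: True
    show ?thesis
    proof (cases "g b = b")
      case True
      have "K a b = 0" using stepA[OF ga True xm] .
      then show ?thesis using ga True by simp
    next
      case False
      have "K a b = 0" using stepB[OF ga False NT] .
      moreover have "b \<noteq> a" using ga False by auto
      moreover have "g b \<noteq> a" using ga False by (metis gi)
      ultimately show ?thesis using ga by simp
    qed
  next
    case ga: False
    show ?thesis
    proof (cases "g b = b")
      case True
      have "K a b = 0" using stepB[OF True ga NT] Kas[of a b] by simp
      moreover have "b \<noteq> a" using True ga by auto
      moreover have "b \<noteq> g a" using True ga by (metis gi)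
      ultimately show ?thesis using True by simp
    next
      case False
      have a3: "a = x \<or> a = y \<or> a = z" using M ga by blast
      have b3: "b = x \<or> b = y \<or> b = z" using M False by blast
      have kx: "K x (g x) = k" using k_def gx by simp
      show ?thesis unfolding kx
        using a3 b3 d gx gy gz k_def k1 k2 K0 Kas[of x y] Kas[of y z] Kas[of z x]
        by (elim disjE) (simp_all add: eq_commute[of y x] eq_commute[of z y] eq_commute[of x z])
    qed
  qed
qed

end


lemma three_struct':
  fixes g :: "'n::finite \<Rightarrow> 'n"
  assumes "is_3cycle g" "g x \<noteq> x"
  shows "g (g x) \<noteq> x" "{i. g i \<noteq> i} = {x, g x, g (g x)}" "g (g (g x)) = x"
proof -
  have gp: "g permutes UNIV" using assms(1) unfolding is_3cycle_def by blast
  show "g (g x) \<noteq> x" using three_struct(1)[of g "\<lambda>a b. 0" x] gp assms by simp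
  show "{i. g i \<noteq> i} = {x, g x, g (g x)}" using three_struct(2)[of g "\<lambda>a b. 0" x] gp assms by simp
  show "g (g (g x)) = x" using three_struct(3)[of g "\<lambda>a b. 0" x] gp assms by simp
qed

lemma perm3:
  fixes x1 x2 x3 y1 y2 y3 :: "'n::finite"
  assumes "distinct [x1, x2, x3]" "distinct [y1, y2, y3]"
  shows "\<exists>h. h permutes UNIV \<and> h x1 = y1 \<and> h x2 = y2 \<and> h x3 = y3"
proof -
  let ?X = "{x1, x2, x3}" and ?Y = "{y1, y2, y3}"
  have cX: "card ?X = 3" and cY: "card ?Y = 3" using assms by simp_all
  have eX: "card (- ?X) = card (UNIV::'n set) - card ?X"
    unfolding Compl_eq_Diff_UNIV by (rule card_Diff_subset) simp_all
  have eY: "card (- ?Y) = card (UNIV::'n set) - card ?Y"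
    unfolding Compl_eq_Diff_UNIV by (rule card_Diff_subset) simp_all
  have "card (- ?X) = card (- ?Y)" unfolding eX eY cX cY ..
  then obtain f where f: "bij_betw f (- ?X) (- ?Y)" using finite_same_card_bij[OF finite finite] by blast
  define h where "h z = (if z = x1 then y1 else if z = x2 then y2 else if z = x3 then y3 else f z)" for z
  have h1: "h x1 = y1" and h2: "h x2 = y2" and h3: "h x3 = y3" using assms by (auto simp add: h_def)
  have ho: "z \<notin> ?X \<Longrightarrow> h z = f z" for z unfolding h_def by simp
  have fin: "f z \<notin> ?Y" if "z \<notin> ?X" for z using bij_betw_apply[OF f, of z] that by simp
  have finj: "z = w" if "z \<notin> ?X" "w \<notin> ?X" "f z = f w" for z w
    using inj_onD[OF bij_betw_imp_inj_on[OF f], of z w] that by simp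
  have hX: "h z \<in> ?Y" if "z \<in> ?X" for z using h1 h2 h3 that by auto
  have hnX: "z \<notin> ?X \<Longrightarrow> h z \<notin> ?Y" for z using ho fin by simp
  have inj: "inj h"
  proof (rule injI)
    fix z w assume e: "h z = h w"
    show "z = w"
    proof (cases "z \<in> ?X")
      case True
      then show ?thesis
      proof (cases "w \<in> ?X")
        case True
        have dy: "y1 \<noteq> y2" "y1 \<noteq> y3" "y2 \<noteq> y3" using assms(2) by auto
        from \<open>z \<in> ?X\<close> \<open>w \<in> ?X\<close> e show ?thesis
          using h1 h2 h3 dy by auto
      next
        case False
        then show ?thesis using hX[OF True] hnX[OF False] e by simp
      qed
    next
      case False
      show ?thesis
      proof (cases "w \<in> ?X")
        case True
        then show ?thesis using hX[OF True] hnX[OF False] e by simp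
      next
        case wF: False
        then show ?thesis using finj[OF False wF] e ho[OF False] ho[OF wF] by simp
      qed
    qed
  qed
  then have "bij h" unfolding bij_def using finite_UNIV_inj_surj[OF finite] by simp
  then have "h permutes UNIV" by (intro bij_imp_permutes) simp_all
  then show ?thesis using h1 h2 h3 by blast
qed

lemma conj3:
  fixes g g' :: "'n::finite \<Rightarrow> 'n"
  assumes c: "is_3cycle g" "is_3cycle g'" and m: "g x \<noteq> x" "g' x' \<noteq> x'"
  shows "\<exists>h. h permutes UNIV \<and> h \<circ> g \<circ> inv h = g' \<and> h x = x' \<and> h (g x) = g' x'"
proof -
  note S = three_struct'[OF c(1) m(1)] and S' = three_struct'[OF c(2) m(2)]
  have gp: "g permutes UNIV" and gp': "g' permutes UNIV" using c unfolding is_3cycle_def by auto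
  have gi: "\<And>u v. g u = g v \<longleftrightarrow> u = v" using permutes_inj[OF gp] by (simp add: inj_eq)
  have gi': "\<And>u v. g' u = g' v \<longleftrightarrow> u = v" using permutes_inj[OF gp'] by (simp add: inj_eq)
  have d: "distinct [x, g x, g (g x)]" using m(1) S(1) by (auto simp: gi)
  have d': "distinct [x', g' x', g' (g' x')]" using m(2) S'(1) by (auto simp: gi')
  obtain h where h: "h permutes UNIV" "h x = x'" "h (g x) = g' x'" "h (g (g x)) = g' (g' x')"
    using perm3[OF d d'] by blast
  have hi: "\<And>u v. h u = h v \<longleftrightarrow> u = v" using permutes_inj[OF h(1)] by (simp add: inj_eq)
  have com: "h (g u) = g' (h u)" for u
  proof (cases "u = x \<or> u = g x \<or> u = g (g x)")
    case True
    then show ?thesis using h S(3) S'(3) by auto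
  next
    case False
    then have gu: "g u = u" using S(2) by blast
    have "h u \<noteq> x'" "h u \<noteq> g' x'" "h u \<noteq> g' (g' x')" using False h hi by metis+
    then have "g' (h u) = h u" using S'(2) by blast
    then show ?thesis using gu by simp
  qed
  have "h \<circ> g \<circ> inv h = g'"
  proof
    fix w
    show "(h \<circ> g \<circ> inv h) w = g' w" using com[of "inv h w"] permutes_inverses[OF h(1)] by simp
  qed
  then show ?thesis using h by blast
qed



lemma skew_axis:
  assumes gp: "g permutes UNIV"
  shows "skew_comm (axis a 1) X g $ m = X g * ((if a = m then 1 else 0) - (if g a = m then 1 else 0))"
  using gp by (auto simp: skew_comm_def perm_act_axis ax_nth)

lemma jac_basis:
  fixes \<kappa> :: "('n::finite \<Rightarrow> 'n) \<Rightarrow> complex^'n \<Rightarrow> complex^'n \<Rightarrow> complex"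
  assumes mj: "mixed_jacobi \<kappa>" and gp: "g permutes UNIV"
  shows "\<kappa> g (axis b 1) (axis c 1) * ((if a = m then 1 else 0) - (if g a = m then 1 else 0))
       + \<kappa> g (axis c 1) (axis a 1) * ((if b = m then 1 else 0) - (if g b = m then 1 else 0))
       + \<kappa> g (axis a 1) (axis b 1) * ((if c = m then 1 else 0) - (if g c = m then 1 else 0)) = 0"
proof -
  have ka: "\<And>v w. kappa_at \<kappa> v w g = \<kappa> g v w" using gp by (simp add: kappa_at_def)
  have "(skew_comm (axis a 1) (kappa_at \<kappa> (axis b 1) (axis c 1)) g + skew_comm (axis b 1) (kappa_at \<kappa> (axis c 1) (axis a 1)) g
                      + skew_comm (axis c 1) (kappa_at \<kappa> (axis a 1) (axis b 1)) g) $ m = 0"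
    using mj unfolding mixed_jacobi_def by (metis zero_index)
  then show ?thesis
    unfolding vector_add_component skew_axis[OF gp] ka .
qed

lemma inv_basis:
  fixes \<kappa> :: "('n::finite \<Rightarrow> 'n) \<Rightarrow> complex^'n \<Rightarrow> complex^'n \<Rightarrow> complex"
  assumes "Sn_invariant \<kappa>" "g permutes UNIV" "h permutes UNIV"
  shows "\<kappa> g (axis a 1) (axis b 1) = \<kappa> (h \<circ> g \<circ> inv h) (axis (h a) 1) (axis (h b) 1)"
proof -
  have "\<kappa> g (axis a 1) (axis b 1) = \<kappa> (h \<circ> g \<circ> inv h) (perm_act h (axis a 1)) (perm_act h (axis b 1))"
    using assms unfolding Sn_invariant_def by blast
  then show ?thesis using assms(3) by (simp only: perm_act_axis)
qed

lemma kt_split: "kappa_tri c g v w = (if is_3cycle g then c * (\<Sum>l\<in>UNIV. v$l * w$(g l)) - c * (\<Sum>l\<in>UNIV. v$(g l) * w$l) else 0)"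
  by (simp add: kappa_tri_def sum_subtractf right_diff_distrib)

lemma kappa_tri_ab: "alt_bilinear (kappa_tri c (g::'n::finite \<Rightarrow> 'n))"
proof -
  have s1: "(\<Sum>l\<in>UNIV. (u+v)$l * w$(g l)) = (\<Sum>l\<in>UNIV. u$l * w$(g l)) + (\<Sum>l\<in>UNIV. v$l * w$(g l))"
    for u v w :: "complex^'n" by (simp add: distrib_right sum.distrib)
  have s2: "(\<Sum>l\<in>UNIV. (u+v)$(g l) * w$l) = (\<Sum>l\<in>UNIV. u$(g l) * w$l) + (\<Sum>l\<in>UNIV. v$(g l) * w$l)"
    for u v w :: "complex^'n" by (simp add: distrib_right sum.distrib)
  have s3: "(\<Sum>l\<in>UNIV. w$l * (u+v)$(g l)) = (\<Sum>l\<in>UNIV. w$l * u$(g l)) + (\<Sum>l\<in>UNIV. w$l * v$(g l))"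
    for u v w :: "complex^'n" by (simp add: distrib_left sum.distrib)
  have s4: "(\<Sum>l\<in>UNIV. w$(g l) * (u+v)$l) = (\<Sum>l\<in>UNIV. w$(g l) * u$l) + (\<Sum>l\<in>UNIV. w$(g l) * v$l)"
    for u v w :: "complex^'n" by (simp add: distrib_left sum.distrib)
  have m1: "(\<Sum>l\<in>UNIV. (a *s v)$l * w$(g l)) = a * (\<Sum>l\<in>UNIV. v$l * w$(g l))"
    for a and v w :: "complex^'n" by (simp add: sum_distrib_left mult.assoc)
  have m2: "(\<Sum>l\<in>UNIV. (a *s v)$(g l) * w$l) = a * (\<Sum>l\<in>UNIV. v$(g l) * w$l)"
    for a and v w :: "complex^'n" by (simp add: sum_distrib_left mult.assoc)
  have m3: "(\<Sum>l\<in>UNIV. w$l * (a *s v)$(g l)) = a * (\<Sum>l\<in>UNIV. w$l * v$(g l))"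
    for a and v w :: "complex^'n" by (simp add: sum_distrib_left mult.left_commute)
  have m4: "(\<Sum>l\<in>UNIV. w$(g l) * (a *s v)$l) = a * (\<Sum>l\<in>UNIV. w$(g l) * v$l)"
    for a and v w :: "complex^'n" by (simp add: sum_distrib_left mult.left_commute)
  have z: "kappa_tri c g v v = 0" for v :: "complex^'n"
    unfolding kappa_tri_def by (simp add: mult.commute)
  show ?thesis unfolding alt_bilinear_def kt_split s1 s2 s3 s4 m1 m2 m3 m4
    using z by (simp add: algebra_simps)
qed

lemma sdelta1: "(\<Sum>l\<in>(UNIV::'n::finite set). (if l = a then 1 else 0) * f l) = (f a :: complex)"
proof -
  have "\<And>l. (if l = a then 1 else 0) * f l = (if a = l then f a else 0)" by auto
  then show ?thesis by simp
qed

lemma sdelta2: "(\<Sum>l\<in>(UNIV::'n::finite set). f l * (if l = a then 1 else 0)) = (f a :: complex)"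
proof -
  have "\<And>l. f l * (if l = a then 1 else 0) = (if a = l then f a else 0)" by auto
  then show ?thesis by simp
qed

lemma kappa_tri_basis:
  fixes g :: "'n::finite \<Rightarrow> 'n"
  shows "kappa_tri c g (axis a 1) (axis b 1) =
    (if is_3cycle g then c * ((if b = g a then 1 else 0) - (if a = g b then 1 else 0)) else 0)"
proof -
  have e1: "(\<Sum>l\<in>UNIV. (axis a 1 :: complex^'n) $ l * (axis b 1 :: complex^'n) $ (g l)) = (if b = g a then 1 else 0)"
    unfolding ax_nth sdelta1 by (simp add: eq_commute)
  have e2: "(\<Sum>l\<in>UNIV. (axis a 1 :: complex^'n) $ (g l) * (axis b 1 :: complex^'n) $ l) = (if a = g b then 1 else 0)"
    unfolding ax_nth sdelta2 by (simp add: eq_commute)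
  show ?thesis unfolding kt_split e1 e2 by (simp add: right_diff_distrib)
qed



lemma conj_moved:
  fixes g h :: "'n::finite \<Rightarrow> 'n"
  assumes hp: "h permutes UNIV"
  shows "{i. (h \<circ> g \<circ> inv h) i \<noteq> i} = h ` {j. g j \<noteq> j}"
proof -
  have hi: "\<And>u v. h u = h v \<longleftrightarrow> u = v" using permutes_inj[OF hp] by (simp add: inj_eq)
  have a: "h (inv h i) = i" for i using permutes_inverses(1)[OF hp] .
  have b: "inv h (h j) = j" for j using permutes_inverses(2)[OF hp] .
  have "(h \<circ> g \<circ> inv h) i \<noteq> i \<longleftrightarrow> g (inv h i) \<noteq> inv h i" for i
  proof -
    have "(h \<circ> g \<circ> inv h) i = i \<longleftrightarrow> h (g (inv h i)) = h (inv h i)" by (simp only: comp_apply a)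
    also have "\<dots> \<longleftrightarrow> g (inv h i) = inv h i" by (rule hi)
    finally show ?thesis by simp
  qed
  then have "{i. (h \<circ> g \<circ> inv h) i \<noteq> i} = {i. g (inv h i) \<noteq> inv h i}" by simp
  also have "\<dots> = h ` {j. g j \<noteq> j}"
  proof
    show "{i. g (inv h i) \<noteq> inv h i} \<subseteq> h ` {j. g j \<noteq> j}"
    proof
      fix i assume "i \<in> {i. g (inv h i) \<noteq> inv h i}"
      then have "inv h i \<in> {j. g j \<noteq> j}" by simp
      then have "h (inv h i) \<in> h ` {j. g j \<noteq> j}" by (rule imageI)
      then show "i \<in> h ` {j. g j \<noteq> j}" by (simp only: a)
    qed
    show "h ` {j. g j \<noteq> j} \<subseteq> {i. g (inv h i) \<noteq> inv h i}"
      by (auto simp: b)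
  qed
  finally show ?thesis .
qed

lemma is3_conj:
  fixes g h :: "'n::finite \<Rightarrow> 'n"
  assumes gp: "g permutes UNIV" and hp: "h permutes UNIV"
  shows "is_3cycle (h \<circ> g \<circ> inv h) \<longleftrightarrow> is_3cycle g"
proof -
  have p: "h \<circ> g \<circ> inv h permutes UNIV"
    using permutes_compose[OF permutes_inv[OF hp] permutes_compose[OF gp hp]] by (simp add: comp_assoc)
  have "card {i. (h \<circ> g \<circ> inv h) i \<noteq> i} = card {j. g j \<noteq> j}"
    unfolding conj_moved[OF hp] by (rule card_image) (metis permutes_inj[OF hp] inj_on_subset subset_UNIV)
  then show ?thesis unfolding is_3cycle_def using p gp by simp
qed

lemma tri_inv:
  fixes g h :: "'n::finite \<Rightarrow> 'n"
  assumes gp: "g permutes UNIV" and hp: "h permutes UNIV"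
  shows "kappa_tri c g v w = kappa_tri c (h \<circ> g \<circ> inv h) (perm_act h v) (perm_act h w)"
proof -
  let ?F = "\<lambda>m. v $ m * w $ (g m) - v $ (g m) * w $ m"
  have ih: "inv h (h u) = u" for u using permutes_inverses(2)[OF hp] .
  have "(\<Sum>l\<in>UNIV. perm_act h v $ l * perm_act h w $ ((h \<circ> g \<circ> inv h) l) - perm_act h v $ ((h \<circ> g \<circ> inv h) l) * perm_act h w $ l)
      = (\<Sum>l\<in>UNIV. ?F (inv h l))"
    by (simp add: perm_act_def ih)
  also have "\<dots> = (\<Sum>l\<in>UNIV. ?F l)"
    using sum.permute[OF permutes_inv[OF hp], of ?F] by (simp add: comp_def)
  finally show ?thesis unfolding kappa_tri_def is3_conj[OF gp hp] by simp
qed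

lemma tri_formula:
  fixes g :: "'n::finite \<Rightarrow> 'n"
  assumes c3: "is_3cycle g" and xm: "g x \<noteq> x"
  shows "kappa_tri c g v w = c * (v$x * w$(g x) - v$(g x) * w$x + v$(g x) * w$(g (g x)) - v$(g (g x)) * w$(g x)
          + v$(g (g x)) * w$x - v$x * w$(g (g x)))"
proof -
  note S = three_struct'[OF c3 xm]
  let ?F = "\<lambda>l. v $ l * w $ (g l) - v $ (g l) * w $ l"
  have gp: "g permutes UNIV" using c3 unfolding is_3cycle_def by blast
  have gi: "\<And>u v. g u = g v \<longleftrightarrow> u = v" using permutes_inj[OF gp] by (simp add: inj_eq)
  have d: "x \<noteq> g x" "g x \<noteq> g (g x)" "g (g x) \<noteq> x" using xm S(1) by (auto simp: gi)
  have "(\<Sum>l\<in>UNIV. ?F l) = (\<Sum>l\<in>{x, g x, g (g x)}. ?F l)"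
  proof (rule sum.mono_neutral_right)
    show "\<forall>i\<in>UNIV - {x, g x, g (g x)}. ?F i = 0"
    proof
      fix i assume "i \<in> UNIV - {x, g x, g (g x)}"
      then have "g i = i" using S(2) by blast
      then show "?F i = 0" by (simp add: mult.commute)
    qed
  qed simp_all
  also have "\<dots> = ?F x + ?F (g x) + ?F (g (g x))" using d by (simp add: add.assoc)
  finally have sumeq: "(\<Sum>l\<in>UNIV. ?F l) = ?F x + ?F (g x) + ?F (g (g x))" .
  have "kappa_tri c g v w = c * (\<Sum>l\<in>UNIV. ?F l)" using c3 by (simp add: kappa_tri_def)
  then show ?thesis unfolding sumeq S(3) by (simp add: right_diff_distrib distrib_left)
qed



lemma three_nonempty:
  fixes g :: "'n::finite \<Rightarrow> 'n"
  assumes "is_3cycle g" obtains x where "g x \<noteq> x"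
proof -
  have "card {i. g i \<noteq> i} = 3" using assms unfolding is_3cycle_def by blast
  then have "{i. g i \<noteq> i} \<noteq> {}" by (metis card.empty zero_neq_numeral)
  then obtain x where "x \<in> {i. g i \<noteq> i}" by blast
  then show ?thesis using that by simp
qed

lemma tri_jac:
  fixes g :: "'n::finite \<Rightarrow> 'n" and v1 v2 v3 :: "complex^'n"
  assumes gp: "g permutes UNIV"
  shows "kappa_tri c g v2 v3 *s (v1 - perm_act g v1) + kappa_tri c g v3 v1 *s (v2 - perm_act g v2)
       + kappa_tri c g v1 v2 *s (v3 - perm_act g v3) = 0"
proof (cases "is_3cycle g")
  case False
  then show ?thesis by (simp add: kappa_tri_def)
next
  case c3: True
  obtain x where xm: "g x \<noteq> x" using three_nonempty[OF c3] by blast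
  note S = three_struct'[OF c3 xm]
  define y where "y = g x"
  define z where "z = g y"
  have gx: "g x = y" and gy: "g y = z" and gz: "g z = x" using S(3) y_def z_def by auto
  have gi: "\<And>u v. g u = g v \<longleftrightarrow> u = v" using permutes_inj[OF gp] by (simp add: inj_eq)
  have ig: "\<And>u. inv g (g u) = u" using permutes_inverses(2)[OF gp] .
  have M: "\<And>c. g c \<noteq> c \<longleftrightarrow> c = x \<or> c = y \<or> c = z" using S(2) y_def z_def by blast
  have T: "\<And>v w. kappa_tri c g v w = c * (v$x * w$y - v$y * w$x + v$y * w$z - v$z * w$y + v$z * w$x - v$x * w$z)"
    using tri_formula[OF c3 xm] gx gy by simp
  have comp: "(a *s (v - perm_act g v)) $ m = a * (v$m - v$(inv g m))" for a and v :: "complex^'n" and m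
    by (simp add: perm_act_def right_diff_distrib)
  show ?thesis
  proof (subst vec_eq_iff, rule allI)
    fix m
    have im: "inv g m = (if m = x then z else if m = y then x else if m = z then y else m)"
    proof -
      consider "m = x" | "m = y" | "m = z" | "m \<noteq> x" "m \<noteq> y" "m \<noteq> z" by blast
      then show ?thesis
      proof cases
        case 1 then show ?thesis using ig[of z] gz by simp
      next
        case 2
        have "x \<noteq> y" using gx xm by auto
        then show ?thesis using ig[of x] gx 2 by simp
      next
        case 3
        have "z \<noteq> x" using S(1) y_def z_def by simp
        moreover have "y \<noteq> z" using gi gy gx xm by metis
        ultimately have "x \<noteq> z" "y \<noteq> z" by auto
        then show ?thesis using ig[of y] gy 3 by simp
      next
        case 4
        then have "g m = m" using M by blast
        then show ?thesis using ig[of m] 4 by simp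
      qed
    qed
    show "(kappa_tri c g v2 v3 *s (v1 - perm_act g v1) + kappa_tri c g v3 v1 *s (v2 - perm_act g v2)
       + kappa_tri c g v1 v2 *s (v3 - perm_act g v3)) $ m = 0 $ m"
      unfolding vector_add_component comp T im zero_index
      by (simp split: if_split; simp add: algebra_simps)
  qed
qed



theorem corollary4p8:
  fixes \<kappa> :: "('n::finite \<Rightarrow> 'n) \<Rightarrow> complex^'n \<Rightarrow> complex^'n \<Rightarrow> complex"
  assumes "CARD('n) \<ge> 3"
    and "constant_2cochain \<kappa>"
  shows "(Sn_invariant \<kappa> \<and> mixed_jacobi \<kappa>) \<longleftrightarrow>
         (\<exists>c::complex. \<forall>g. g permutes UNIV \<longrightarrow> \<kappa> g = kappa_tri c g)"
proof
  assume "Sn_invariant \<kappa> \<and> mixed_jacobi \<kappa>"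
  then have inv: "Sn_invariant \<kappa>" and mj: "mixed_jacobi \<kappa>" by auto
  have ab: "\<And>g. g permutes UNIV \<Longrightarrow> alt_bilinear (\<kappa> g)"
    using assms(2) unfolding constant_2cochain_def by blast
  define K where "K g a b = \<kappa> g (axis a 1) (axis b 1)" for g a b
  have K0: "\<And>a. K g a a = 0" if "g permutes UNIV" for g
    using ab[OF that] unfolding K_def alt_bilinear_def by blast
  have Kas: "\<And>a b. K g a b = - K g b a" if "g permutes UNIV" for g
    using ab_antisym[OF ab[OF that]] unfolding K_def by blast
  have J: "\<And>a b c m. K g b c * ((if a = m then 1 else 0) - (if g a = m then 1 else 0))
              + K g c a * ((if b = m then 1 else 0) - (if g b = m then 1 else 0))
              + K g a b * ((if c = m then 1 else 0) - (if g c = m then 1 else 0)) = 0"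
    if "g permutes UNIV" for g
    using jac_basis[OF mj that] unfolding K_def by blast
  have I: "\<And>h a b. h permutes UNIV \<Longrightarrow> h \<circ> g \<circ> inv h = g \<Longrightarrow> K g a b = K g (h a) (h b)"
    if "g permutes UNIV" for g
  proof -
    fix h a b assume "h permutes UNIV" "h \<circ> g \<circ> inv h = g"
    then show "K g a b = K g (h a) (h b)" using inv_basis[OF inv that, of h a b] unfolding K_def by simp
  qed
  have c0: "K g a b = 0" if "g permutes UNIV" "\<not> is_3cycle g" for g a b
    using core0[OF that(1) K0[OF that(1)] Kas[OF that(1)] J[OF that(1)] I[OF that(1)] that(2)] .
  have c3: "K g a b = K g x (g x) * ((if b = g a then 1 else 0) - (if a = g b then 1 else 0))"
    if "is_3cycle g" "g x \<noteq> x" for g a b x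
  proof -
    have gp: "g permutes UNIV" using that(1) unfolding is_3cycle_def by blast
    show ?thesis using core3[OF gp K0[OF gp] Kas[OF gp] J[OF gp] I[OF gp] that] .
  qed
  obtain c where cc: "\<And>g x. is_3cycle g \<Longrightarrow> g x \<noteq> x \<Longrightarrow> K g x (g x) = c"
  proof (cases "\<exists>(g::'n \<Rightarrow> 'n) x. is_3cycle g \<and> g x \<noteq> x")
    case True
    then obtain g0 :: "'n \<Rightarrow> 'n" and x0 where g0: "is_3cycle g0" "g0 x0 \<noteq> x0" by blast
    have g0p: "g0 permutes UNIV" using g0(1) unfolding is_3cycle_def by blast
    have "K g x (g x) = K g0 x0 (g0 x0)" if g3: "is_3cycle g" "g x \<noteq> x" for g x
    proof -
      obtain h where h: "h permutes UNIV" "h \<circ> g0 \<circ> inv h = g" "h x0 = x" "h (g0 x0) = g x"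
        using conj3[OF g0(1) g3(1) g0(2) g3(2)] by blast
      show ?thesis using inv_basis[OF inv g0p h(1), of x0 "g0 x0"] h unfolding K_def by simp
    qed
    then show ?thesis using that by blast
  next
    case False
    then show ?thesis using that by blast
  qed
  show "\<exists>c::complex. \<forall>g. g permutes UNIV \<longrightarrow> \<kappa> g = kappa_tri c g"
  proof (intro exI allI impI)
    fix g :: "'n \<Rightarrow> 'n" assume gp: "g permutes UNIV"
    have bas: "K g a b = kappa_tri c g (axis a 1) (axis b 1)" for a b
    proof (cases "is_3cycle g")
      case True
      obtain x where xm: "g x \<noteq> x" using three_nonempty[OF True] by blast
      show ?thesis using c3[OF True xm, of a b] cc[OF True xm] True by (simp add: kappa_tri_basis)
    next
      case False
      show ?thesis using c0[OF gp False] False by (simp add: kappa_tri_basis)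
    qed
    show "\<kappa> g = kappa_tri c g"
    proof (intro ext)
      fix v w
      show "\<kappa> g v w = kappa_tri c g v w"
        unfolding ab_expand[OF ab[OF gp], of v w] ab_expand[OF kappa_tri_ab, of c g v w]
        using bas unfolding K_def by simp
    qed
  qed
next
  assume "\<exists>c::complex. \<forall>g. g permutes UNIV \<longrightarrow> \<kappa> g = kappa_tri c g"
  then obtain c where hk: "\<And>g. g permutes UNIV \<Longrightarrow> \<kappa> g = kappa_tri c g" by blast
  have "Sn_invariant \<kappa>"
    unfolding Sn_invariant_def
  proof (intro allI impI)
    fix g h v w assume gp: "g permutes (UNIV :: 'n set)" and hp: "h permutes (UNIV :: 'n set)"
    have p: "h \<circ> g \<circ> inv h permutes UNIV"
      using permutes_compose[OF permutes_inv[OF hp] permutes_compose[OF gp hp]] by (simp add: comp_assoc)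
    show "\<kappa> g v w = \<kappa> (h \<circ> g \<circ> inv h) (perm_act h v) (perm_act h w)"
      unfolding hk[OF gp] hk[OF p] using tri_inv[OF gp hp] by blast
  qed
  moreover have "mixed_jacobi \<kappa>"
    unfolding mixed_jacobi_def
  proof (intro allI ext)
    fix v1 v2 v3 :: "complex^'n" and g :: "'n \<Rightarrow> 'n"
    show "skew_comm v1 (kappa_at \<kappa> v2 v3) g + skew_comm v2 (kappa_at \<kappa> v3 v1) g + skew_comm v3 (kappa_at \<kappa> v1 v2) g = 0"
    proof (cases "g permutes UNIV")
      case True
      then show ?thesis using tri_jac[OF True, of c v2 v3 v1] hk[OF True]
        by (simp add: skew_comm_def kappa_at_def)
    next
      case False
      then show ?thesis by (simp add: skew_comm_def)
    qed
  qed
  ultimately show "Sn_invariant \<kappa> \<and> mixed_jacobi \<kappa>" by blast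
qed


end
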